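(* Let $\mathcal{S}$ be a bounded set functor such that $\mathcal{S}(V)$ covers $V$ for every locally convex space $V$. Let $E,F,X$ be locally convex spaces over $\mathbb{K}$ such that the evaluation homomorphism $\eta_F\colon F\to (F'_{\mathcal{S}})'_{\mathcal{S}}$ is continuous. Let $n\in\mathbb{N}_0\cup\{\infty\}$, $U\subseteq X$ open, and $f\colon U\to L(E,F)_{\mathcal{S}}$ a $C^n_{\mathbb{K}}$-map. Then $g\colon U\to L(F'_{\mathcal{S}},E'_{\mathcal{S}})_{\mathcal{S}}$, $z\mapsto f(z)'$, is $C^n_{\mathbb{K}}$, where $f(z)'(\lambda)=\lambda\circ f(z)$.
   Context: A bounded set functor is a functor $\mathcal{S}$ from locally convex spaces to sets such that $\mathcal{S}(E)$ is a set of bounded subsets of $E$ and for continuous linear $A\colon E\to F$ and $M\in\mathcal{S}(E)$ one has $A(M)\in\mathcal{S}(F)$, with $\mathcal{S}(A)(M)=A(M)$. $L(E,F)_{\mathcal{S}}$ is the space of continuous linear maps $E\to F$ with the topology of uniform convergence on the sets in $\mathcal{S}(E)$; $E'_{\mathcal{S}}=L(E,\mathbb{K})_{\mathcal{S}}$; $\eta_F(x)(\lambda)=\lambda(x)$. $C^n_{\mathbb{K}}$ is in Keller's sense (continuity plus iterated continuous directional derivatives $df(x,y)=\lim_{t\to 0}(f(x+ty)-f(x))/t$). *)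

theory Defs
  imports "HOL-Analysis.Analysis" "HOL-Library.Function_Algebras"
begin

text \<open>A (Hausdorff) locally convex space over the scalar field 'k (a real normed
field, i.e. R or C) is represented by a carrier set inside an ambient additive
group, a scalar multiplication and a generating family of seminorms.\<close>

record ('a, 'k) lcs =
  carr :: "'a set"
  scl  :: "'k \<Rightarrow> 'a \<Rightarrow> 'a"
  sn   :: "('a \<Rightarrow> real) set"

definition seminorm_on :: "('a::ab_group_add, 'k::real_normed_field) lcs \<Rightarrow> ('a \<Rightarrow> real) \<Rightarrow> bool" where
  "seminorm_on V p \<longleftrightarrow>
     (\<forall>x\<in>carr V. 0 \<le> p x) \<and>
     (\<forall>x\<in>carr V. \<forall>y\<in>carr V. p (x + y) \<le> p x + p y) \<and>
     (\<forall>c. \<forall>x\<in>carr V. p (scl V c x) = norm c * p x)"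

definition lcs :: "('a::ab_group_add, 'k::real_normed_field) lcs \<Rightarrow> bool" where
  "lcs V \<longleftrightarrow>
     0 \<in> carr V \<and>
     (\<forall>x\<in>carr V. \<forall>y\<in>carr V. x + y \<in> carr V) \<and>
     (\<forall>c. \<forall>x\<in>carr V. scl V c x \<in> carr V) \<and>
     (\<forall>x\<in>carr V. scl V 1 x = x) \<and>
     (\<forall>a b. \<forall>x\<in>carr V. scl V (a + b) x = scl V a x + scl V b x) \<and>
     (\<forall>a. \<forall>x\<in>carr V. \<forall>y\<in>carr V. scl V a (x + y) = scl V a x + scl V a y) \<and>
     (\<forall>a b. \<forall>x\<in>carr V. scl V a (scl V b x) = scl V (a * b) x) \<and>
     sn V \<noteq> {} \<and> (\<forall>p\<in>sn V. seminorm_on V p) \<and>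
     (\<forall>x\<in>carr V. x \<noteq> 0 \<longrightarrow> (\<exists>p\<in>sn V. 0 < p x))"

definition lcs_top :: "('a::ab_group_add, 'k) lcs \<Rightarrow> 'a topology" where
  "lcs_top V = topology (\<lambda>U. U \<subseteq> carr V \<and>
     (\<forall>x\<in>U. \<exists>P r. finite P \<and> P \<subseteq> sn V \<and> 0 < r \<and>
        {y \<in> carr V. \<forall>p\<in>P. p (y - x) < r} \<subseteq> U))"

definition clin :: "('a::ab_group_add, 'k) lcs \<Rightarrow> ('b::ab_group_add, 'k) lcs \<Rightarrow> ('a \<Rightarrow> 'b) \<Rightarrow> bool" where
  "clin V W A \<longleftrightarrow>
     (\<forall>x\<in>carr V. A x \<in> carr W) \<and>
     (\<forall>x\<in>carr V. \<forall>y\<in>carr V. A (x + y) = A x + A y) \<and>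
     (\<forall>c. \<forall>x\<in>carr V. A (scl V c x) = scl W c (A x)) \<and>
     continuous_map (lcs_top V) (lcs_top W) A"

definition bnd :: "('a::ab_group_add, 'k) lcs \<Rightarrow> 'a set \<Rightarrow> bool" where
  "bnd V M \<longleftrightarrow> M \<subseteq> carr V \<and> (\<forall>p\<in>sn V. bdd_above (p ` M))"

text \<open>The space L(V,W)_S of continuous linear maps (extended by 0 off the carrier)
with the topology of uniform convergence on the sets in S(V) = SV.\<close>
definition Lsp :: "('a::ab_group_add, 'k) lcs \<Rightarrow> ('b::ab_group_add, 'k) lcs \<Rightarrow> 'a set set
                    \<Rightarrow> ('a \<Rightarrow> 'b, 'k) lcs" where
  "Lsp V W SV = \<lparr> carr = {A. clin V W A \<and> (\<forall>x. x \<notin> carr V \<longrightarrow> A x = 0)},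
                  scl = (\<lambda>c A x. if x \<in> carr V then scl W c (A x) else 0),
                  sn = {(\<lambda>A. Sup (insert 0 ((\<lambda>x. q (A x)) ` M))) | M q. M \<in> SV \<and> q \<in> sn W} \<rparr>"

definition Kfield :: "('k::real_normed_field, 'k) lcs" where
  "Kfield = \<lparr> carr = UNIV, scl = (*), sn = {norm} \<rparr>"

definition dual :: "('a::ab_group_add, 'k::real_normed_field) lcs \<Rightarrow> 'a set set \<Rightarrow> ('a \<Rightarrow> 'k, 'k) lcs" where
  "dual V SV = Lsp V Kfield SV"

definition evl :: "('f::ab_group_add, 'k::real_normed_field) lcs \<Rightarrow> 'f set set \<Rightarrow> 'f \<Rightarrow> ('f \<Rightarrow> 'k) \<Rightarrow> 'k" where
  "evl F SF y = (\<lambda>l. if l \<in> carr (dual F SF) then l y else 0)"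

definition transp :: "('f::ab_group_add, 'k::real_normed_field) lcs \<Rightarrow> 'f set set \<Rightarrow> ('e \<Rightarrow> 'f)
                       \<Rightarrow> ('f \<Rightarrow> 'k) \<Rightarrow> 'e \<Rightarrow> 'k" where
  "transp F SF T = (\<lambda>l. if l \<in> carr (dual F SF) then l \<circ> T else 0)"

definition bsf_covering :: "('a::ab_group_add, 'k) lcs \<Rightarrow> 'a set set \<Rightarrow> bool" where
  "bsf_covering V SV \<longleftrightarrow> (\<forall>M\<in>SV. bnd V M) \<and> \<Union>SV = carr V"

text \<open>Functoriality: continuous linear A : V \<rightarrow> W maps S(V) into S(W).\<close>
definition bsf_compat :: "('a::ab_group_add, 'k) lcs \<Rightarrow> 'a set set \<Rightarrow> ('b::ab_group_add, 'k) lcs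
                          \<Rightarrow> 'b set set \<Rightarrow> bool" where
  "bsf_compat V SV W SW \<longleftrightarrow> (\<forall>A M. clin V W A \<and> M \<in> SV \<longrightarrow> A ` M \<in> SW)"

definition has_dlim :: "('b::ab_group_add, 'k::real_normed_field) lcs \<Rightarrow> ('k \<Rightarrow> 'b) \<Rightarrow> 'b \<Rightarrow> bool" where
  "has_dlim Y q v \<longleftrightarrow> v \<in> carr Y \<and>
     (\<forall>W. openin (lcs_top Y) W \<and> v \<in> W \<longrightarrow> (\<forall>\<^sub>F t in at 0. q t \<in> W))"

definition dlim :: "('b::ab_group_add, 'k::real_normed_field) lcs \<Rightarrow> ('k \<Rightarrow> 'b) \<Rightarrow> 'b" where
  "dlim Y q = (THE v. has_dlim Y q v)"

definition dquot :: "('x::ab_group_add, 'k::real_normed_field) lcs \<Rightarrow> ('y::ab_group_add, 'k) lcs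
                     \<Rightarrow> ('x \<Rightarrow> 'y) \<Rightarrow> 'x \<Rightarrow> 'x \<Rightarrow> 'k \<Rightarrow> 'y" where
  "dquot X Y g x y t = scl Y (inverse t) (g (x + scl X t y) - g x)"

text \<open>Iterated directional derivatives d^(k) f(x, y_0, ..., y_(k-1)); the directions
are given by a function ys on {..<k}.\<close>
fun dd :: "('x::ab_group_add, 'k::real_normed_field) lcs \<Rightarrow> ('y::ab_group_add, 'k) lcs
           \<Rightarrow> ('x \<Rightarrow> 'y) \<Rightarrow> nat \<Rightarrow> 'x \<Rightarrow> (nat \<Rightarrow> 'x) \<Rightarrow> 'y" where
  "dd X Y f 0 x ys = f x"
| "dd X Y f (Suc k) x ys = dlim Y (dquot X Y (\<lambda>z. dd X Y f k z ys) x (ys k))"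

definition Ck :: "('x::ab_group_add, 'k::real_normed_field) lcs \<Rightarrow> ('y::ab_group_add, 'k) lcs
                  \<Rightarrow> 'x set \<Rightarrow> ('x \<Rightarrow> 'y) \<Rightarrow> nat \<Rightarrow> bool" where
  "Ck X Y U f k \<longleftrightarrow> (\<forall>j\<le>k.
     (\<forall>i<j. \<forall>x\<in>U. \<forall>ys\<in>PiE {..<j} (\<lambda>_. carr X).
          \<exists>v. has_dlim Y (dquot X Y (\<lambda>z. dd X Y f i z ys) x (ys i)) v) \<and>
     continuous_map (prod_topology (subtopology (lcs_top X) U)
                                   (product_topology (\<lambda>_. lcs_top X) {..<j}))
                    (lcs_top Y) (\<lambda>(x, ys). dd X Y f j x ys))"

definition Cn :: "('x::ab_group_add, 'k::real_normed_field) lcs \<Rightarrow> ('y::ab_group_add, 'k) lcs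
                  \<Rightarrow> 'x set \<Rightarrow> ('x \<Rightarrow> 'y) \<Rightarrow> enat \<Rightarrow> bool" where
  "Cn X Y U f n \<longleftrightarrow> (\<forall>k. enat k \<le> n \<longrightarrow> Ck X Y U f k)"

end

theory Submission
  imports Defs
begin


definition lball :: "('a::ab_group_add, 'k) lcs \<Rightarrow> ('a \<Rightarrow> real) set \<Rightarrow> real \<Rightarrow> 'a \<Rightarrow> 'a set" where
  "lball V P r x = {y \<in> carr V. \<forall>p\<in>P. p (y - x) < r}"

definition nbh :: "('a::ab_group_add, 'k) lcs \<Rightarrow> 'a \<Rightarrow> 'a set \<Rightarrow> bool" where
  "nbh V x U \<longleftrightarrow> (\<exists>P r. finite P \<and> P \<subseteq> sn V \<and> 0 < r \<and> lball V P r x \<subseteq> U)"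

lemma istop_lcs: "istopology (\<lambda>U. U \<subseteq> carr V \<and> (\<forall>x\<in>U. nbh V x U))"
  unfolding istopology_def
proof (rule conjI; intro allI impI)
  fix S T assume S: "S \<subseteq> carr V \<and> (\<forall>x\<in>S. nbh V x S)"
    and T: "T \<subseteq> carr V \<and> (\<forall>x\<in>T. nbh V x T)"
  show "S \<inter> T \<subseteq> carr V \<and> (\<forall>x\<in>S \<inter> T. nbh V x (S \<inter> T))"
  proof (intro conjI ballI)
    show "S \<inter> T \<subseteq> carr V" using S by blast
    fix x assume "x \<in> S \<inter> T"
    then have xS: "x \<in> S" and xT: "x \<in> T" by auto
    obtain P1 r1 where 1: "finite P1" "P1 \<subseteq> sn V" "0 < r1" "lball V P1 r1 x \<subseteq> S"
      using S xS unfolding nbh_def by blast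
    obtain P2 r2 where 2: "finite P2" "P2 \<subseteq> sn V" "0 < r2" "lball V P2 r2 x \<subseteq> T"
      using T xT unfolding nbh_def by blast
    have "lball V (P1 \<union> P2) (min r1 r2) x \<subseteq> lball V P1 r1 x"
         "lball V (P1 \<union> P2) (min r1 r2) x \<subseteq> lball V P2 r2 x"
      unfolding lball_def by auto
    then show "nbh V x (S \<inter> T)" unfolding nbh_def
      apply (intro exI[of _ "P1 \<union> P2"] exI[of _ "min r1 r2"])
      using 1 2 by auto
  qed
next
  fix K assume K: "\<forall>S\<in>K. S \<subseteq> carr V \<and> (\<forall>x\<in>S. nbh V x S)"
  show "\<Union>K \<subseteq> carr V \<and> (\<forall>x\<in>\<Union>K. nbh V x (\<Union>K))"
  proof (intro conjI ballI)
    show "\<Union>K \<subseteq> carr V" using K by blast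
    fix x assume "x \<in> \<Union>K"
    then obtain S where SK: "S \<in> K" and xS: "x \<in> S" by (rule UnionE)
    then have "nbh V x S" using K by blast
    then show "nbh V x (\<Union>K)" unfolding nbh_def using SK by blast
  qed
qed

lemma openin_lcs: "openin (lcs_top V) U \<longleftrightarrow> U \<subseteq> carr V \<and> (\<forall>x\<in>U. nbh V x U)"
proof -
  have "lcs_top V = topology (\<lambda>U. U \<subseteq> carr V \<and> (\<forall>x\<in>U. nbh V x U))"
    unfolding lcs_top_def nbh_def lball_def by simp
  then show ?thesis by (simp only: topology_inverse'[OF istop_lcs])
qed

lemma topspace_lcs [simp]: "topspace (lcs_top V) = carr V"
proof -
  have "openin (lcs_top V) (carr V)" unfolding openin_lcs nbh_def
  proof (intro conjI ballI)
    fix x show "\<exists>P r. finite P \<and> P \<subseteq> sn V \<and> 0 < r \<and> lball V P r x \<subseteq> carr V"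
      by (rule exI[of _ "{}"], rule exI[of _ "1::real"]) (auto simp: lball_def)
  qed simp
  moreover have "topspace (lcs_top V) \<subseteq> carr V"
    using openin_lcs[of V "topspace (lcs_top V)"] by simp
  ultimately show ?thesis using openin_subset[of "lcs_top V" "carr V"] by blast
qed


lemma openin_lcs_sub: "openin (lcs_top V) U \<Longrightarrow> U \<subseteq> carr V"
  using openin_lcs by blast

lemma openin_lcs_nbh: "openin (lcs_top V) U \<Longrightarrow> x \<in> U \<Longrightarrow> \<exists>P r. finite P \<and> P \<subseteq> sn V \<and> 0 < r \<and> lball V P r x \<subseteq> U"
  using openin_lcs unfolding nbh_def by blast

context
  fixes V :: "('a::ab_group_add, 'k::real_normed_field) lcs"
  assumes V: "lcs V"
begin

lemmas lcsD = V[unfolded lcs_def]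

lemma zero_in: "0 \<in> carr V" using lcsD by (elim conjE)
lemma add_in: "x \<in> carr V \<Longrightarrow> y \<in> carr V \<Longrightarrow> x + y \<in> carr V" using lcsD by (elim conjE) blast
lemma scl_in: "x \<in> carr V \<Longrightarrow> scl V c x \<in> carr V" using lcsD by (elim conjE) blast
lemma scl_one: "x \<in> carr V \<Longrightarrow> scl V 1 x = x" using lcsD by (elim conjE) blast
lemma scl_add1: "x \<in> carr V \<Longrightarrow> scl V (a + b) x = scl V a x + scl V b x" using lcsD by (elim conjE) blast
lemma scl_add2: "x \<in> carr V \<Longrightarrow> y \<in> carr V \<Longrightarrow> scl V a (x + y) = scl V a x + scl V a y" using lcsD by (elim conjE) blast
lemma scl_scl: "x \<in> carr V \<Longrightarrow> scl V a (scl V b x) = scl V (a * b) x" using lcsD by (elim conjE) blast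
lemma sn_ne: "sn V \<noteq> {}" using lcsD by (elim conjE)
lemma sep: "x \<in> carr V \<Longrightarrow> x \<noteq> 0 \<Longrightarrow> \<exists>p\<in>sn V. 0 < p x" using lcsD by (elim conjE) blast
lemma semi: "p \<in> sn V \<Longrightarrow> seminorm_on V p" using lcsD by (elim conjE) blast
lemma p_nonneg: "p \<in> sn V \<Longrightarrow> x \<in> carr V \<Longrightarrow> 0 \<le> p x" using semi unfolding seminorm_on_def by blast
lemma p_tri: "p \<in> sn V \<Longrightarrow> x \<in> carr V \<Longrightarrow> y \<in> carr V \<Longrightarrow> p (x + y) \<le> p x + p y" using semi unfolding seminorm_on_def by blast
lemma p_hom: "p \<in> sn V \<Longrightarrow> x \<in> carr V \<Longrightarrow> p (scl V c x) = norm c * p x" using semi unfolding seminorm_on_def by blast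

lemma scl_zero_left: "x \<in> carr V \<Longrightarrow> scl V 0 x = 0"
  using scl_add1[of x 0 0] by simp
lemma scl_zero_right: "scl V c 0 = 0"
  using scl_add2[OF zero_in zero_in, of c] by simp
lemma scl_neg: "x \<in> carr V \<Longrightarrow> scl V (-1) x = - x"
  using scl_add1[of x 1 "-1"] scl_one[of x] scl_zero_left[of x]
  by (simp add: eq_neg_iff_add_eq_0 add.commute)
lemma neg_in: "x \<in> carr V \<Longrightarrow> - x \<in> carr V"
  using scl_neg scl_in by metis
lemma diff_in: "x \<in> carr V \<Longrightarrow> y \<in> carr V \<Longrightarrow> x - y \<in> carr V"
  using add_in neg_in by (metis diff_conv_add_uminus)
lemma p_zero: "p \<in> sn V \<Longrightarrow> p 0 = 0"
  using p_hom[OF _ zero_in, of p 0] scl_zero_right by simp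
lemma p_neg: "p \<in> sn V \<Longrightarrow> x \<in> carr V \<Longrightarrow> p (- x) = p x"
  using p_hom[of p x "-1"] scl_neg by simp
lemma p_sym: "p \<in> sn V \<Longrightarrow> x \<in> carr V \<Longrightarrow> y \<in> carr V \<Longrightarrow> p (x - y) = p (y - x)"
  using p_neg[of p "y - x"] diff_in by (metis minus_diff_eq)
lemma p_tri3: "p \<in> sn V \<Longrightarrow> a \<in> carr V \<Longrightarrow> b \<in> carr V \<Longrightarrow> c \<in> carr V \<Longrightarrow> p (a - c) \<le> p (a - b) + p (b - c)"
  using p_tri[of p "a - b" "b - c"] diff_in by simp

lemma ball_open:
  assumes P: "finite P" "P \<subseteq> sn V" and x: "x \<in> carr V"
  shows "openin (lcs_top V) (lball V P r x)"
  unfolding openin_lcs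
proof (intro conjI ballI)
  show "lball V P r x \<subseteq> carr V" unfolding lball_def by blast
  fix z assume z: "z \<in> lball V P r x"
  then have zc: "z \<in> carr V" and zp: "\<And>p. p \<in> P \<Longrightarrow> p (z - x) < r" unfolding lball_def by auto
  define r' where "r' = Min (insert 1 ((\<lambda>p. r - p (z - x)) ` P))"
  have r'pos: "0 < r'" unfolding r'_def using P zp by (subst Min_gr_iff) auto
  have r'le: "r' \<le> r - p (z - x)" if "p \<in> P" for p unfolding r'_def using P that by (intro Min_le) auto
  have "lball V P r' z \<subseteq> lball V P r x"
  proof
    fix y assume "y \<in> lball V P r' z"
    then have y: "y \<in> carr V" "\<And>p. p \<in> P \<Longrightarrow> p (y - z) < r'" unfolding lball_def by auto
    have "p (y - x) < r" if p: "p \<in> P" for p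
    proof -
      have "p (y - x) \<le> p (y - z) + p (z - x)" using p_tri3 P p y zc x by blast
      then show ?thesis using y(2)[OF p] r'le[OF p] by linarith
    qed
    then show "y \<in> lball V P r x" unfolding lball_def using y by blast
  qed
  then show "nbh V z (lball V P r x)" unfolding nbh_def using P r'pos by blast
qed

lemma in_ball: "P \<subseteq> sn V \<Longrightarrow> x \<in> carr V \<Longrightarrow> 0 < r \<Longrightarrow> x \<in> lball V P r x"
  unfolding lball_def using p_zero by (auto simp: subset_iff) (metis order_less_le)

lemma dlim_unique:
  assumes 1: "has_dlim V q v1" and 2: "has_dlim V q v2"
  shows "v1 = v2"
proof (rule ccontr)
  assume ne: "v1 \<noteq> v2"
  have c: "v1 \<in> carr V" "v2 \<in> carr V" using 1 2 unfolding has_dlim_def by auto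
  then have "v1 - v2 \<in> carr V" "v1 - v2 \<noteq> 0" using diff_in ne by auto
  then obtain p where p: "p \<in> sn V" "0 < p (v1 - v2)" using sep by blast
  define d where "d = p (v1 - v2) / 2"
  have d: "0 < d" using p by (simp add: d_def)
  have o1: "openin (lcs_top V) (lball V {p} d v1)" and o2: "openin (lcs_top V) (lball V {p} d v2)"
    using ball_open c p by auto
  have i1: "v1 \<in> lball V {p} d v1" and i2: "v2 \<in> lball V {p} d v2" using in_ball c p d by auto
  have "\<forall>\<^sub>F t in at 0. q t \<in> lball V {p} d v1" using 1 o1 i1 unfolding has_dlim_def by blast
  moreover have "\<forall>\<^sub>F t in at 0. q t \<in> lball V {p} d v2" using 2 o2 i2 unfolding has_dlim_def by blast
  ultimately have "\<forall>\<^sub>F t in at (0::'k). False"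
  proof (rule eventually_elim2)
    fix t assume a: "q t \<in> lball V {p} d v1" "q t \<in> lball V {p} d v2"
    then have qc: "q t \<in> carr V" and "p (q t - v1) < d" "p (q t - v2) < d" unfolding lball_def by auto
    moreover have "p (v1 - v2) \<le> p (v1 - q t) + p (q t - v2)" using p_tri3 p c qc by blast
    moreover have "p (v1 - q t) = p (q t - v1)" using p_sym p c qc by blast
    ultimately show False unfolding d_def by linarith
  qed
  then show False by simp
qed

lemma dlim_eq: "has_dlim V q v \<Longrightarrow> dlim V q = v"
  unfolding dlim_def using dlim_unique by blast

end


definition linmap :: "('a::ab_group_add, 'k) lcs \<Rightarrow> ('b::ab_group_add, 'k) lcs \<Rightarrow> ('a \<Rightarrow> 'b) \<Rightarrow> bool" where
  "linmap V W A \<longleftrightarrow>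
     (\<forall>x\<in>carr V. A x \<in> carr W) \<and>
     (\<forall>x\<in>carr V. \<forall>y\<in>carr V. A (x + y) = A x + A y) \<and>
     (\<forall>c. \<forall>x\<in>carr V. A (scl V c x) = scl W c (A x))"

definition cont0 :: "('a::ab_group_add, 'k) lcs \<Rightarrow> ('b::ab_group_add, 'k) lcs \<Rightarrow> ('a \<Rightarrow> 'b) \<Rightarrow> bool" where
  "cont0 V W A \<longleftrightarrow> (\<forall>q\<in>sn W. \<forall>r>0. \<exists>P \<delta>. finite P \<and> P \<subseteq> sn V \<and> 0 < \<delta> \<and>
      (\<forall>y\<in>carr V. (\<forall>p\<in>P. p y < \<delta>) \<longrightarrow> q (A y) < r))"

lemma clin_linmap: "clin V W A \<longleftrightarrow> linmap V W A \<and> continuous_map (lcs_top V) (lcs_top W) A"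
  unfolding clin_def linmap_def by blast

lemma linmap_in: "linmap V W A \<Longrightarrow> x \<in> carr V \<Longrightarrow> A x \<in> carr W"
  unfolding linmap_def by blast
lemma linmap_add: "linmap V W A \<Longrightarrow> x \<in> carr V \<Longrightarrow> y \<in> carr V \<Longrightarrow> A (x + y) = A x + A y"
  unfolding linmap_def by blast
lemma linmap_scl: "linmap V W A \<Longrightarrow> x \<in> carr V \<Longrightarrow> A (scl V c x) = scl W c (A x)"
  unfolding linmap_def by blast

lemma linmap_zero: "lcs V \<Longrightarrow> linmap V W A \<Longrightarrow> A 0 = 0"
  using linmap_add[of V W A 0 0] zero_in[of V] by simp

lemma linmap_diff: "lcs V \<Longrightarrow> linmap V W A \<Longrightarrow> x \<in> carr V \<Longrightarrow> y \<in> carr V \<Longrightarrow> A (x - y) = A x - A y"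
  using linmap_add[of V W A "x - y" y] diff_in[of V x y] by (simp add: eq_diff_eq)

lemma cont_cont0:
  assumes V: "lcs V" and W: "lcs W" and L: "linmap V W A"
    and C: "continuous_map (lcs_top V) (lcs_top W) A"
  shows "cont0 V W A"
  unfolding cont0_def
proof (intro ballI allI impI)
  fix q r assume q: "q \<in> sn W" and r: "(0::real) < r"
  have "openin (lcs_top W) (lball W {q} r 0)" using ball_open[OF W, of "{q}" 0 r] q zero_in[OF W] by auto
  then have o: "openin (lcs_top V) {x \<in> carr V. A x \<in> lball W {q} r 0}"
    using openin_continuous_map_preimage[OF C] by (metis topspace_lcs)
  have "A 0 \<in> lball W {q} r 0"
    using in_ball[OF W, of "{q}" 0 r] q r zero_in[OF W] linmap_zero[OF V L] by simp
  then have "0 \<in> {x \<in> carr V. A x \<in> lball W {q} r 0}" using zero_in[OF V] by simp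
  then have "\<exists>P \<delta>. finite P \<and> P \<subseteq> sn V \<and> 0 < \<delta> \<and> lball V P \<delta> 0 \<subseteq> {x \<in> carr V. A x \<in> lball W {q} r 0}"
    by (rule openin_lcs_nbh[OF o])
  then obtain P \<delta> where P: "finite P" "P \<subseteq> sn V" "0 < \<delta>" and sub: "lball V P \<delta> 0 \<subseteq> {x \<in> carr V. A x \<in> lball W {q} r 0}"
    by blast
  show "\<exists>P \<delta>. finite P \<and> P \<subseteq> sn V \<and> 0 < \<delta> \<and> (\<forall>y\<in>carr V. (\<forall>p\<in>P. p y < \<delta>) \<longrightarrow> q (A y) < r)"
  proof (intro exI conjI ballI impI)
    fix y assume y: "y \<in> carr V" "\<forall>p\<in>P. p y < \<delta>"
    then have "y \<in> lball V P \<delta> 0" unfolding lball_def by simp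
    then have "A y \<in> lball W {q} r 0" using sub by blast
    then show "q (A y) < r" unfolding lball_def by simp
  qed (use P in auto)
qed

lemma cont0D: "cont0 V W A \<Longrightarrow> q \<in> sn W \<Longrightarrow> 0 < r \<Longrightarrow> \<exists>P \<delta>. finite P \<and> P \<subseteq> sn V \<and> 0 < \<delta> \<and>
      (\<forall>y\<in>carr V. (\<forall>p\<in>P. p y < \<delta>) \<longrightarrow> q (A y) < r)"
  unfolding cont0_def by simp

lemma cont0_finite:
  assumes "cont0 V W A" and "finite Q" and "Q \<subseteq> sn W" and r: "0 < r"
  shows "\<exists>P \<delta>. finite P \<and> P \<subseteq> sn V \<and> 0 < \<delta> \<and> (\<forall>y\<in>carr V. (\<forall>p\<in>P. p y < \<delta>) \<longrightarrow> (\<forall>q\<in>Q. q (A y) < r))"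
  using assms(2,3)
proof (induction Q rule: finite_induct)
  case empty
  show ?case by (rule exI[of _ "{}"], rule exI[of _ 1]) auto
next
  case (insert q Q)
  have "Q \<subseteq> sn W" "q \<in> sn W" using insert.prems by auto
  then have "\<exists>P \<delta>. finite P \<and> P \<subseteq> sn V \<and> 0 < \<delta> \<and> (\<forall>y\<in>carr V. (\<forall>p\<in>P. p y < \<delta>) \<longrightarrow> (\<forall>q\<in>Q. q (A y) < r))"
    by (intro insert.IH)
  then obtain P1 \<delta>1 where 1: "finite P1" "P1 \<subseteq> sn V" "0 < \<delta>1" "\<forall>y\<in>carr V. (\<forall>p\<in>P1. p y < \<delta>1) \<longrightarrow> (\<forall>q\<in>Q. q (A y) < r)"
    by blast
  have "\<exists>P \<delta>. finite P \<and> P \<subseteq> sn V \<and> 0 < \<delta> \<and> (\<forall>y\<in>carr V. (\<forall>p\<in>P. p y < \<delta>) \<longrightarrow> q (A y) < r)"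
    by (rule cont0D[OF assms(1) \<open>q \<in> sn W\<close> r])
  then obtain P2 \<delta>2 where 2: "finite P2" "P2 \<subseteq> sn V" "0 < \<delta>2" "\<forall>y\<in>carr V. (\<forall>p\<in>P2. p y < \<delta>2) \<longrightarrow> q (A y) < r"
    by blast
  show ?case
  proof (rule exI[of _ "P1 \<union> P2"], rule exI[of _ "min \<delta>1 \<delta>2"], intro conjI ballI impI)
    fix y q' assume y: "y \<in> carr V" "\<forall>p\<in>P1 \<union> P2. p y < min \<delta>1 \<delta>2" and q': "q' \<in> insert q Q"
    have "\<forall>p\<in>P1. p y < \<delta>1" "\<forall>p\<in>P2. p y < \<delta>2" using y by auto
    then show "q' (A y) < r" using 1(4) 2(4) y(1) q' by blast
  qed (use 1 2 in auto)
qed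

lemma cont0_cont:
  assumes V: "lcs V" and W: "lcs W" and L: "linmap V W A" and C0: "cont0 V W A"
  shows "continuous_map (lcs_top V) (lcs_top W) A"
  unfolding continuous_map_def
proof (intro conjI allI impI)
  show "A \<in> topspace (lcs_top V) \<rightarrow> topspace (lcs_top W)" using L unfolding linmap_def by auto
  fix U assume U: "openin (lcs_top W) U"
  show "openin (lcs_top V) {x \<in> topspace (lcs_top V). A x \<in> U}"
    unfolding openin_lcs nbh_def
  proof (intro conjI ballI)
    fix x assume x: "x \<in> {x \<in> topspace (lcs_top V). A x \<in> U}"
    then have xc: "x \<in> carr V" and AU: "A x \<in> U" by auto
    obtain Q r where Q: "finite Q" "Q \<subseteq> sn W" "0 < r" "lball W Q r (A x) \<subseteq> U"
      using openin_lcs_nbh[OF U AU] by blast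
    obtain P \<delta> where P: "finite P" "P \<subseteq> sn V" "0 < \<delta>" and
      est: "\<forall>y\<in>carr V. (\<forall>p\<in>P. p y < \<delta>) \<longrightarrow> (\<forall>q\<in>Q. q (A y) < r)"
      using cont0_finite[OF C0 Q(1,2,3)] by blast
    have "lball V P \<delta> x \<subseteq> {x \<in> topspace (lcs_top V). A x \<in> U}"
    proof
      fix y assume "y \<in> lball V P \<delta> x"
      then have y: "y \<in> carr V" "\<forall>p\<in>P. p (y - x) < \<delta>" unfolding lball_def by auto
      have "y - x \<in> carr V" using diff_in[OF V y(1) xc] .
      then have "\<forall>q\<in>Q. q (A (y - x)) < r" using est y(2) by blast
      then have "\<forall>q\<in>Q. q (A y - A x) < r" using linmap_diff[OF V L y(1) xc] by simp
      then have "A y \<in> lball W Q r (A x)" unfolding lball_def using linmap_in[OF L y(1)] by simp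
      then show "y \<in> {x \<in> topspace (lcs_top V). A x \<in> U}" using Q(4) y(1) by auto
    qed
    then show "\<exists>P r. finite P \<and> P \<subseteq> sn V \<and> 0 < r \<and> lball V P r x \<subseteq> {x \<in> topspace (lcs_top V). A x \<in> U}"
      using P by blast
  qed auto
qed

lemma bound_finite:
  assumes "finite P" "P \<subseteq> sn V" "bnd V M"
  shows "\<exists>B. 0 \<le> B \<and> (\<forall>p\<in>P. \<forall>y\<in>M. p y \<le> B)"
  using assms(1,2)
proof (induction P rule: finite_induct)
  case empty then show ?case by auto
next
  case (insert p P)
  then obtain B where B: "0 \<le> B" "\<forall>p\<in>P. \<forall>y\<in>M. p y \<le> B" by auto
  have "bdd_above (p ` M)" using assms(3) insert unfolding bnd_def by auto
  then obtain B' where "\<forall>y\<in>M. p y \<le> B'" unfolding bdd_above_def by auto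
  then show ?case using B by (intro exI[of _ "max B B'"]) (auto simp: le_max_iff_disj)
qed

lemma cont0_bdd:
  fixes V :: "('a::ab_group_add, 'k::real_normed_field) lcs" and W :: "('b::ab_group_add, 'k) lcs"
  assumes V: "lcs V" and W: "lcs W" and L: "linmap V W A" and C0: "cont0 V W A"
    and M: "bnd V M" and q: "q \<in> sn W"
  shows "bdd_above ((\<lambda>y. q (A y)) ` M)"
proof -
  obtain P \<delta> where P: "finite P" "P \<subseteq> sn V" "0 < \<delta>" and
    est: "\<forall>y\<in>carr V. (\<forall>p\<in>P. p y < \<delta>) \<longrightarrow> q (A y) < 1"
    using C0 q unfolding cont0_def by (meson zero_less_one)
  obtain B where B: "0 \<le> B" "\<forall>p\<in>P. \<forall>y\<in>M. p y \<le> B" using bound_finite[OF P(1,2) M] by blast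
  define e where "e = \<delta> / (B + 1)"
  have e: "0 < e" using P B by (simp add: e_def)
  define c :: 'k where "c = of_real e"
  have nc: "norm c = e" using e by (simp add: c_def)
  have "q (A y) \<le> 1 / e" if y: "y \<in> M" for y
  proof -
    have yc: "y \<in> carr V" using M y unfolding bnd_def by auto
    have "p (scl V c y) < \<delta>" if p: "p \<in> P" for p
    proof -
      have "p (scl V c y) = e * p y" using p_hom[OF V, of p y c] p P yc nc by auto
      also have "\<dots> \<le> e * B" using B p y e by (simp add: mult_left_mono)
      also have "\<dots> < \<delta>" using B P unfolding e_def by (simp add: field_simps)
      finally show ?thesis .
    qed
    then have "q (A (scl V c y)) < 1" using est scl_in[OF V yc] by blast
    then have "e * q (A y) < 1" using linmap_scl[OF L yc] p_hom[OF W q linmap_in[OF L yc]] nc by simp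
    then show ?thesis using e by (simp add: field_simps)
  qed
  then show ?thesis unfolding bdd_above_def by blast
qed


definition supn :: "'a set \<Rightarrow> ('b \<Rightarrow> real) \<Rightarrow> ('a \<Rightarrow> 'b) \<Rightarrow> real" where
  "supn M q A = Sup (insert 0 ((\<lambda>x. q (A x)) ` M))"

definition sbdd :: "'a set \<Rightarrow> ('b \<Rightarrow> real) \<Rightarrow> ('a \<Rightarrow> 'b) \<Rightarrow> bool" where
  "sbdd M q A \<longleftrightarrow> bdd_above ((\<lambda>x. q (A x)) ` M)"

lemma supn_ge: "sbdd M q A \<Longrightarrow> x \<in> M \<Longrightarrow> q (A x) \<le> supn M q A"
  unfolding supn_def sbdd_def by (rule cSup_upper) auto

lemma supn_nonneg: "sbdd M q A \<Longrightarrow> 0 \<le> supn M q A"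
  unfolding supn_def sbdd_def by (rule cSup_upper) auto

lemma supn_le: "0 \<le> B \<Longrightarrow> (\<And>x. x \<in> M \<Longrightarrow> q (A x) \<le> B) \<Longrightarrow> supn M q A \<le> B"
  unfolding supn_def by (rule cSup_least) auto

lemma clin_add:
  assumes V: "lcs V" and W: "lcs W" and A: "clin V W A" and B: "clin V W B"
  shows "clin V W (A + B)"
proof -
  have LA: "linmap V W A" and LB: "linmap V W B" using A B clin_linmap by auto
  have CA: "cont0 V W A" and CB: "cont0 V W B" using cont_cont0[OF V W] A B clin_linmap by auto
  have L: "linmap V W (A + B)" unfolding linmap_def
  proof (intro conjI ballI allI)
    fix x assume x: "x \<in> carr V"
    show "(A + B) x \<in> carr W" using add_in[OF W linmap_in[OF LA x] linmap_in[OF LB x]] by simp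
    fix y assume y: "y \<in> carr V"
    show "(A + B) (x + y) = (A + B) x + (A + B) y"
      using linmap_add[OF LA x y] linmap_add[OF LB x y] by (simp add: ac_simps)
  next
    fix c x assume x: "x \<in> carr V"
    show "(A + B) (scl V c x) = scl W c ((A + B) x)"
      using linmap_scl[OF LA x] linmap_scl[OF LB x] scl_add2[OF W linmap_in[OF LA x] linmap_in[OF LB x]] by simp
  qed
  have "cont0 V W (A + B)" unfolding cont0_def
  proof (intro ballI allI impI)
    fix q r assume q: "q \<in> sn W" and r: "(0::real) < r"
    have "\<exists>P \<delta>. finite P \<and> P \<subseteq> sn V \<and> 0 < \<delta> \<and> (\<forall>y\<in>carr V. (\<forall>p\<in>P. p y < \<delta>) \<longrightarrow> q (A y) < r/2)"
      by (rule cont0D[OF CA q]) (use r in simp)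
    then obtain P1 \<delta>1 where 1: "finite P1" "P1 \<subseteq> sn V" "0 < \<delta>1" "\<forall>y\<in>carr V. (\<forall>p\<in>P1. p y < \<delta>1) \<longrightarrow> q (A y) < r/2"
      by blast
    have "\<exists>P \<delta>. finite P \<and> P \<subseteq> sn V \<and> 0 < \<delta> \<and> (\<forall>y\<in>carr V. (\<forall>p\<in>P. p y < \<delta>) \<longrightarrow> q (B y) < r/2)"
      by (rule cont0D[OF CB q]) (use r in simp)
    then obtain P2 \<delta>2 where 2: "finite P2" "P2 \<subseteq> sn V" "0 < \<delta>2" "\<forall>y\<in>carr V. (\<forall>p\<in>P2. p y < \<delta>2) \<longrightarrow> q (B y) < r/2"
      by blast
    show "\<exists>P \<delta>. finite P \<and> P \<subseteq> sn V \<and> 0 < \<delta> \<and> (\<forall>y\<in>carr V. (\<forall>p\<in>P. p y < \<delta>) \<longrightarrow> q ((A + B) y) < r)"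
    proof (rule exI[of _ "P1 \<union> P2"], rule exI[of _ "min \<delta>1 \<delta>2"], intro conjI ballI impI)
      fix y assume y: "y \<in> carr V" "\<forall>p\<in>P1 \<union> P2. p y < min \<delta>1 \<delta>2"
      have "\<forall>p\<in>P1. p y < \<delta>1" "\<forall>p\<in>P2. p y < \<delta>2" using y by auto
      then have "q (A y) < r/2" "q (B y) < r/2" using 1(4) 2(4) y(1) by auto
      moreover have "q (A y + B y) \<le> q (A y) + q (B y)"
        using p_tri[OF W q linmap_in[OF LA y(1)] linmap_in[OF LB y(1)]] .
      ultimately show "q ((A + B) y) < r" by simp
    qed (use 1 2 in auto)
  qed
  then show ?thesis using L cont0_cont[OF V W L] clin_linmap by blast
qed

lemma clin_scl:
  fixes V :: "('a::ab_group_add, 'k::real_normed_field) lcs" and W :: "('b::ab_group_add, 'k) lcs"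
  assumes V: "lcs V" and W: "lcs W" and A: "clin V W A"
  shows "clin V W (\<lambda>x. if x \<in> carr V then scl W c (A x) else 0)" (is "clin V W ?B")
proof -
  have LA: "linmap V W A" using A clin_linmap by auto
  have CA: "cont0 V W A" using cont_cont0[OF V W] A clin_linmap by auto
  have L: "linmap V W ?B" unfolding linmap_def
  proof (intro conjI ballI allI)
    fix x assume x: "x \<in> carr V"
    show "?B x \<in> carr W" using scl_in[OF W linmap_in[OF LA x]] x by simp
    fix y assume y: "y \<in> carr V"
    show "?B (x + y) = ?B x + ?B y"
      using linmap_add[OF LA x y] scl_add2[OF W linmap_in[OF LA x] linmap_in[OF LA y]] x y add_in[OF V x y] by simp
  next
    fix d x assume x: "x \<in> carr V"
    show "?B (scl V d x) = scl W d (?B x)"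
      using linmap_scl[OF LA x] scl_in[OF V x] x scl_scl[OF W linmap_in[OF LA x]] by (simp add: mult.commute)
  qed
  have "cont0 V W ?B" unfolding cont0_def
  proof (intro ballI allI impI)
    fix q r assume q: "q \<in> sn W" and r: "(0::real) < r"
    have "\<exists>P \<delta>. finite P \<and> P \<subseteq> sn V \<and> 0 < \<delta> \<and> (\<forall>y\<in>carr V. (\<forall>p\<in>P. p y < \<delta>) \<longrightarrow> q (A y) < r / (norm c + 1))"
      by (rule cont0D[OF CA q], rule divide_pos_pos[OF r], rule add_nonneg_pos) auto
    then obtain P1 \<delta>1 where 1: "finite P1" "P1 \<subseteq> sn V" "0 < \<delta>1" "\<forall>y\<in>carr V. (\<forall>p\<in>P1. p y < \<delta>1) \<longrightarrow> q (A y) < r / (norm c + 1)"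
      by blast
    show "\<exists>P \<delta>. finite P \<and> P \<subseteq> sn V \<and> 0 < \<delta> \<and> (\<forall>y\<in>carr V. (\<forall>p\<in>P. p y < \<delta>) \<longrightarrow> q (?B y) < r)"
    proof (rule exI[of _ "P1"], rule exI[of _ "\<delta>1"], intro conjI ballI impI)
      fix y assume y: "y \<in> carr V" "\<forall>p\<in>P1. p y < \<delta>1"
      then have a: "q (A y) < r / (norm c + 1)" using 1(4) by auto
      have "q (?B y) = norm c * q (A y)" using p_hom[OF W q linmap_in[OF LA y(1)]] y by simp
      also have "\<dots> \<le> norm c * (r / (norm c + 1))" using a by (intro mult_left_mono) auto
      also have "\<dots> < r"
      proof -
        have d: "0 < 1 + norm c" by (simp add: add_pos_nonneg)
        then show ?thesis using r by (simp add: field_simps)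
      qed
      finally show "q (?B y) < r" .
    qed (use 1 in auto)
  qed
  then show ?thesis using L cont0_cont[OF V W L] clin_linmap by blast
qed

lemma clin_zero:
  assumes V: "lcs V" and W: "lcs W"
  shows "clin V W 0"
  unfolding clin_def zero_fun_def using zero_in[OF W] scl_zero_right[OF W] by simp

context
  fixes V :: "('a::ab_group_add, 'k::real_normed_field) lcs" and W :: "('b::ab_group_add, 'k) lcs"
    and SV :: "'a set set"
  assumes V: "lcs V" and W: "lcs W" and cov: "bsf_covering V SV"
begin

lemma carr_L: "A \<in> carr (Lsp V W SV) \<longleftrightarrow> clin V W A \<and> (\<forall>x. x \<notin> carr V \<longrightarrow> A x = 0)"
  unfolding Lsp_def by simp

lemma scl_L: "scl (Lsp V W SV) c A = (\<lambda>x. if x \<in> carr V then scl W c (A x) else 0)"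
  unfolding Lsp_def by simp

lemma sn_L: "sn (Lsp V W SV) = {supn M q | M q. M \<in> SV \<and> q \<in> sn W}"
  unfolding Lsp_def supn_def[abs_def] by simp

lemma L_val: "A \<in> carr (Lsp V W SV) \<Longrightarrow> A x \<in> carr W"
  unfolding carr_L clin_def using zero_in[OF W] by (cases "x \<in> carr V") auto

lemma L_bdd: "A \<in> carr (Lsp V W SV) \<Longrightarrow> M \<in> SV \<Longrightarrow> q \<in> sn W \<Longrightarrow> sbdd M q A"
proof -
  assume A: "A \<in> carr (Lsp V W SV)" and M: "M \<in> SV" and q: "q \<in> sn W"
  have L: "linmap V W A" and C: "continuous_map (lcs_top V) (lcs_top W) A" using A unfolding carr_L clin_linmap by auto
  have "bnd V M" using cov M unfolding bsf_covering_def by blast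
  then show ?thesis unfolding sbdd_def by (rule cont0_bdd[OF V W L cont_cont0[OF V W L C] _ q])
qed

lemma lcs_L: "lcs (Lsp V W SV)"
proof -
  let ?L = "Lsp V W SV"
  have c0: "0 \<in> carr ?L" unfolding carr_L using clin_zero[OF V W] by simp
  have cadd: "A + B \<in> carr ?L" if "A \<in> carr ?L" "B \<in> carr ?L" for A B
    using that clin_add[OF V W] unfolding carr_L by simp
  have cscl: "scl ?L c A \<in> carr ?L" if "A \<in> carr ?L" for A c
    using that clin_scl[OF V W] unfolding carr_L scl_L by simp
  have s1: "scl ?L 1 A = A" if "A \<in> carr ?L" for A
    using that scl_one[OF W L_val[OF that]] unfolding scl_L carr_L by (auto simp: fun_eq_iff)
  have s2: "scl ?L (a + b) A = scl ?L a A + scl ?L b A" if "A \<in> carr ?L" for A a b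
    using scl_add1[OF W L_val[OF that]] unfolding scl_L by (auto simp: fun_eq_iff)
  have s3: "scl ?L a (A + B) = scl ?L a A + scl ?L a B" if "A \<in> carr ?L" "B \<in> carr ?L" for A B a
    using scl_add2[OF W L_val[OF that(1)] L_val[OF that(2)]] unfolding scl_L by (auto simp: fun_eq_iff)
  have s4: "scl ?L a (scl ?L b A) = scl ?L (a * b) A" if "A \<in> carr ?L" for A a b
    using scl_scl[OF W L_val[OF that]] unfolding scl_L by (auto simp: fun_eq_iff)
  have SVne: "SV \<noteq> {}" using cov zero_in[OF V] unfolding bsf_covering_def by auto
  have sne: "sn ?L \<noteq> {}" unfolding sn_L using SVne sn_ne[OF W] by blast
  have semi: "seminorm_on ?L p" if p: "p \<in> sn ?L" for p
  proof -
    obtain M q where p: "p = supn M q" and M: "M \<in> SV" and q: "q \<in> sn W" using p unfolding sn_L by blast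
    have MV: "M \<subseteq> carr V" using cov M unfolding bsf_covering_def by blast
    show ?thesis unfolding seminorm_on_def p
    proof (intro conjI ballI allI)
      fix A assume A: "A \<in> carr ?L"
      show "0 \<le> supn M q A" by (rule supn_nonneg[OF L_bdd[OF A M q]])
      fix B assume B: "B \<in> carr ?L"
      show "supn M q (A + B) \<le> supn M q A + supn M q B"
      proof (rule supn_le)
        show "0 \<le> supn M q A + supn M q B" using supn_nonneg[OF L_bdd[OF A M q]] supn_nonneg[OF L_bdd[OF B M q]] by simp
        fix x assume x: "x \<in> M"
        have "q ((A + B) x) \<le> q (A x) + q (B x)" using p_tri[OF W q L_val[OF A] L_val[OF B]] by simp
        also have "\<dots> \<le> supn M q A + supn M q B"
          using supn_ge[OF L_bdd[OF A M q] x] supn_ge[OF L_bdd[OF B M q] x] by simp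
        finally show "q ((A + B) x) \<le> supn M q A + supn M q B" .
      qed
    next
      fix c A assume A: "A \<in> carr ?L"
      have val: "q (scl ?L c A x) = norm c * q (A x)" if "x \<in> M" for x
        using that MV p_hom[OF W q L_val[OF A]] unfolding scl_L by auto
      show "supn M q (scl ?L c A) = norm c * supn M q A"
      proof (rule antisym)
        show "supn M q (scl ?L c A) \<le> norm c * supn M q A"
          by (rule supn_le) (use supn_nonneg[OF L_bdd[OF A M q]] supn_ge[OF L_bdd[OF A M q]] val
                 in \<open>auto intro: mult_left_mono\<close>)
      next
        show "norm c * supn M q A \<le> supn M q (scl ?L c A)"
        proof (cases "c = 0")
          case True then show ?thesis using supn_nonneg[OF L_bdd[OF cscl[OF A, of c] M q]] by simp
        next
          case False
          then have nc: "0 < norm c" by simp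
          have "supn M q A \<le> supn M q (scl ?L c A) / norm c"
          proof (rule supn_le)
            show "0 \<le> supn M q (scl ?L c A) / norm c" using supn_nonneg[OF L_bdd[OF cscl[OF A, of c] M q]] by simp
            fix x assume x: "x \<in> M"
            have "norm c * q (A x) \<le> supn M q (scl ?L c A)" using supn_ge[OF L_bdd[OF cscl[OF A, of c] M q] x] val[OF x] by simp
            then show "q (A x) \<le> supn M q (scl ?L c A) / norm c" using nc by (simp add: field_simps)
          qed
          then show ?thesis using nc by (simp add: field_simps)
        qed
      qed
    qed
  qed
  have sepL: "\<exists>p\<in>sn ?L. 0 < p A" if A: "A \<in> carr ?L" "A \<noteq> 0" for A
  proof -
    obtain x where x: "A x \<noteq> 0" using A(2) by (auto simp: fun_eq_iff)
    then have xV: "x \<in> carr V" using A(1) unfolding carr_L by blast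
    then obtain M where M: "M \<in> SV" "x \<in> M" using cov unfolding bsf_covering_def by blast
    obtain q where q: "q \<in> sn W" "0 < q (A x)" using sep[OF W L_val[OF A(1)] x] by blast
    have "q (A x) \<le> supn M q A" using supn_ge[OF L_bdd[OF A(1) M(1) q(1)] M(2)] .
    moreover have "supn M q \<in> sn ?L" unfolding sn_L using M q by blast
    ultimately show ?thesis using q(2) by (intro bexI[of _ "supn M q"]) auto
  qed
  show ?thesis unfolding lcs_def
    by (intro conjI ballI allI impI) (simp_all add: c0 cadd cscl s1 s2 s3 s4 sne semi sepL)
qed

end

lemma lcs_K: "lcs (Kfield :: ('k::real_normed_field, 'k) lcs)"
  unfolding lcs_def seminorm_on_def Kfield_def
  by (simp add: norm_triangle_ineq norm_mult distrib_left distrib_right)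


lemma dd_cong: "(\<And>l. l < i \<Longrightarrow> ys l = ys' l) \<Longrightarrow> dd X Y f i x ys = dd X Y f i x ys'"
proof (induction i arbitrary: x)
  case 0 then show ?case by simp
next
  case (Suc i)
  have "(\<lambda>z. dd X Y f i z ys) = (\<lambda>z. dd X Y f i z ys')" using Suc by auto
  moreover have "ys i = ys' i" using Suc by auto
  ultimately show ?case by simp
qed

lemma eventually_in_U:
  fixes X :: "('x::ab_group_add, 'k::real_normed_field) lcs"
  assumes X: "lcs X" and U: "openin (lcs_top X) U" and x: "x \<in> U" and v: "v \<in> carr X"
  shows "\<forall>\<^sub>F t in at (0::'k). x + scl X t v \<in> U"
proof -
  have xc: "x \<in> carr X" using openin_lcs_sub[OF U] x by blast
  have "\<exists>P r. finite P \<and> P \<subseteq> sn X \<and> 0 < r \<and> lball X P r x \<subseteq> U" by (rule openin_lcs_nbh[OF U x])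
  then obtain P r where P: "finite P" "P \<subseteq> sn X" "0 < r" "lball X P r x \<subseteq> U" by blast
  define S where "S = (\<Sum>p\<in>P. p v)"
  have S0: "0 \<le> S" unfolding S_def using P(2) p_nonneg[OF X _ v] by (intro sum_nonneg) auto
  have pS: "p v \<le> S" if "p \<in> P" for p
    unfolding S_def using P that p_nonneg[OF X _ v] by (intro member_le_sum) auto
  define d where "d = r / (S + 1)"
  have d: "0 < d" using P S0 by (simp add: d_def)
  show ?thesis unfolding eventually_at
  proof (intro exI[of _ d] conjI ballI impI)
    fix t :: 'k assume "t \<in> UNIV" and t: "t \<noteq> 0 \<and> dist t 0 < d"
    then have nt: "norm t < d" by simp
    have in1: "x + scl X t v \<in> carr X" using add_in[OF X xc scl_in[OF X v]] .
    have "p (x + scl X t v - x) < r" if p: "p \<in> P" for p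
    proof -
      have pX: "p \<in> sn X" using P p by auto
      have "p (x + scl X t v - x) = norm t * p v" using p_hom[OF X pX v] by simp
      also have "\<dots> \<le> norm t * S" using pS[OF p] by (simp add: mult_left_mono)
      also have "\<dots> \<le> norm t * (S + 1)" by (simp add: mult_left_mono)
      also have "\<dots> < d * (S + 1)" using nt S0 by (intro mult_strict_right_mono) auto
      also have "\<dots> = r" using S0 by (simp add: d_def)
      finally show ?thesis .
    qed
    then have "x + scl X t v \<in> lball X P r x" unfolding lball_def using in1 by simp
    then show "x + scl X t v \<in> U" using P(4) by blast
  qed (use d in auto)
qed

lemma Ck_vals:
  assumes f: "Ck X Y U f k" and i: "i \<le> k" and x: "x \<in> U" and xc: "x \<in> carr X"
    and ys: "\<And>l. l < i \<Longrightarrow> ys l \<in> carr X"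
  shows "dd X Y f i x ys \<in> carr Y"
proof -
  have C: "continuous_map (prod_topology (subtopology (lcs_top X) U)
                                   (product_topology (\<lambda>_. lcs_top X) {..<i}))
                    (lcs_top Y) (\<lambda>(x, ys). dd X Y f i x ys)"
    using f i unfolding Ck_def by blast
  have "(x, restrict ys {..<i}) \<in> topspace (prod_topology (subtopology (lcs_top X) U)
                                   (product_topology (\<lambda>_. lcs_top X) {..<i}))"
    using x xc ys by (auto simp: topspace_subtopology)
  then have "(\<lambda>(x, ys). dd X Y f i x ys) (x, restrict ys {..<i}) \<in> topspace (lcs_top Y)"
    by (rule continuous_map_image_subset_topspace[OF C, THEN subsetD, OF imageI])
  then have "dd X Y f i x (restrict ys {..<i}) \<in> carr Y" by simp
  moreover have "dd X Y f i x (restrict ys {..<i}) = dd X Y f i x ys" by (rule dd_cong) auto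
  ultimately show ?thesis by simp
qed

lemma Ck_comp:
  fixes X :: "('x::ab_group_add, 'k::real_normed_field) lcs" and Y :: "('y::ab_group_add, 'k) lcs"
    and Z :: "('z::ab_group_add, 'k) lcs"
  assumes X: "lcs X" and Y: "lcs Y" and Z: "lcs Z" and U: "openin (lcs_top X) U"
    and T: "linmap Y Z T" and TC: "continuous_map (lcs_top Y) (lcs_top Z) T"
    and f: "Ck X Y U f k"
  shows "Ck X Z U (\<lambda>z. T (f z)) k"
proof -
  define g where "g = (\<lambda>z. T (f z))"
  have UX: "U \<subseteq> carr X" using openin_lcs_sub[OF U] .
  have key: "has_dlim Z (dquot X Z (\<lambda>z. dd X Z g i z ys) x (ys i)) (T (dd X Y f (Suc i) x ys))"
    if ik: "i < k" and x: "x \<in> U" and ys: "\<And>l. l \<le> i \<Longrightarrow> ys l \<in> carr X"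
      and EQ: "\<And>z. z \<in> U \<Longrightarrow> dd X Z g i z ys = T (dd X Y f i z ys)" for i x ys
  proof -
    define h where "h = (\<lambda>z. dd X Y f i z ys)"
    have Sk: "Suc i \<le> k" using ik by simp
    have "\<forall>i'<Suc i. \<forall>x\<in>U. \<forall>ys\<in>PiE {..<Suc i} (\<lambda>_. carr X).
          \<exists>v. has_dlim Y (dquot X Y (\<lambda>z. dd X Y f i' z ys) x (ys i')) v"
      using f Sk unfolding Ck_def by blast
    then have "\<forall>x\<in>U. \<forall>ys\<in>PiE {..<Suc i} (\<lambda>_. carr X).
          \<exists>v. has_dlim Y (dquot X Y (\<lambda>z. dd X Y f i z ys) x (ys i)) v" by simp
    moreover have "restrict ys {..<Suc i} \<in> PiE {..<Suc i} (\<lambda>_. carr X)" using ys by auto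
    ultimately obtain v where "has_dlim Y (dquot X Y (\<lambda>z. dd X Y f i z (restrict ys {..<Suc i})) x (restrict ys {..<Suc i} i)) v"
      using x by blast
    moreover have "(\<lambda>z. dd X Y f i z (restrict ys {..<Suc i})) = h" unfolding h_def
      by (rule ext, rule dd_cong) auto
    ultimately have hv: "has_dlim Y (dquot X Y h x (ys i)) v" by simp
    have dv: "dd X Y f (Suc i) x ys = v" using dlim_eq[OF Y hv] unfolding h_def by simp
    have vc: "v \<in> carr Y" using hv unfolding has_dlim_def by blast
    have hc: "h z \<in> carr Y" if "z \<in> U" for z
      unfolding h_def using Ck_vals[OF f _ that] ik that UX ys by auto
    have ev: "\<forall>\<^sub>F t in at (0::'k). x + scl X t (ys i) \<in> U"
      by (rule eventually_in_U[OF X U x ys]) simp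
    show ?thesis unfolding has_dlim_def
    proof (intro conjI allI impI)
      show "T (dd X Y f (Suc i) x ys) \<in> carr Z" using linmap_in[OF T vc] dv by simp
      fix W assume W: "openin (lcs_top Z) W \<and> T (dd X Y f (Suc i) x ys) \<in> W"
      have So: "openin (lcs_top Y) {y \<in> carr Y. T y \<in> W}"
        using openin_continuous_map_preimage[OF TC] W by (metis topspace_lcs)
      have "v \<in> {y \<in> carr Y. T y \<in> W}" using W vc dv by simp
      then have evS: "\<forall>\<^sub>F t in at 0. dquot X Y h x (ys i) t \<in> {y \<in> carr Y. T y \<in> W}"
        using hv So unfolding has_dlim_def by blast
      show "\<forall>\<^sub>F t in at 0. dquot X Z (\<lambda>z. dd X Z g i z ys) x (ys i) t \<in> W"
        using ev evS
      proof (rule eventually_elim2)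
        fix t :: 'k
        assume xt: "x + scl X t (ys i) \<in> U" and Q: "dquot X Y h x (ys i) t \<in> {y \<in> carr Y. T y \<in> W}"
        have "dquot X Z (\<lambda>z. dd X Z g i z ys) x (ys i) t
              = scl Z (inverse t) (T (h (x + scl X t (ys i))) - T (h x))"
          unfolding dquot_def h_def using EQ[OF xt] EQ[OF x] by simp
        also have "\<dots> = scl Z (inverse t) (T (h (x + scl X t (ys i)) - h x))"
          using linmap_diff[OF Y T hc[OF xt] hc[OF x]] by simp
        also have "\<dots> = T (dquot X Y h x (ys i) t)"
          unfolding dquot_def using linmap_scl[OF T diff_in[OF Y hc[OF xt] hc[OF x]]] by simp
        finally show "dquot X Z (\<lambda>z. dd X Z g i z ys) x (ys i) t \<in> W" using Q by simp
      qed
    qed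
  qed
  have EQ: "\<forall>x\<in>U. \<forall>ys. (\<forall>l<i. ys l \<in> carr X) \<longrightarrow> dd X Z g i x ys = T (dd X Y f i x ys)"
    if "i \<le> k" for i
    using that
  proof (induction i)
    case 0 then show ?case by (simp add: g_def)
  next
    case (Suc i)
    show ?case
    proof (intro ballI allI impI)
      fix x ys assume x: "x \<in> U" and ys: "\<forall>l<Suc i. ys l \<in> carr X"
      have "has_dlim Z (dquot X Z (\<lambda>z. dd X Z g i z ys) x (ys i)) (T (dd X Y f (Suc i) x ys))"
        by (rule key) (use Suc x ys in auto)
      then show "dd X Z g (Suc i) x ys = T (dd X Y f (Suc i) x ys)"
        using dlim_eq[OF Z] by simp
    qed
  qed
  show ?thesis unfolding Ck_def g_def[symmetric]
  proof (intro allI impI conjI ballI)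
    fix j i x ys assume j: "j \<le> k" and ij: "i < j" and x: "x \<in> U" and ys: "ys \<in> PiE {..<j} (\<lambda>_. carr X)"
    show "\<exists>v. has_dlim Z (dquot X Z (\<lambda>z. dd X Z g i z ys) x (ys i)) v"
    proof (rule exI, rule key)
      have ysc: "\<forall>l<j. ys l \<in> carr X" using ys by auto
      show "i < k" using j ij by simp
      show "x \<in> U" by (rule x)
      show "\<And>l. l \<le> i \<Longrightarrow> ys l \<in> carr X" using ysc ij by auto
      show "\<And>z. z \<in> U \<Longrightarrow> dd X Z g i z ys = T (dd X Y f i z ys)"
        using EQ[of i] ysc ij j by auto
    qed
  next
    fix j assume j: "j \<le> k"
    have C: "continuous_map (prod_topology (subtopology (lcs_top X) U)
                                   (product_topology (\<lambda>_. lcs_top X) {..<j}))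
                    (lcs_top Y) (\<lambda>(x, ys). dd X Y f j x ys)"
      using f j unfolding Ck_def by blast
    show "continuous_map (prod_topology (subtopology (lcs_top X) U)
                                   (product_topology (\<lambda>_. lcs_top X) {..<j}))
                    (lcs_top Z) (\<lambda>(x, ys). dd X Z g j x ys)"
    proof (rule continuous_map_eq[OF continuous_map_compose[OF C TC]])
      fix p assume "p \<in> topspace (prod_topology (subtopology (lcs_top X) U)
                                   (product_topology (\<lambda>_. lcs_top X) {..<j}))"
      then obtain x ys where p: "p = (x, ys)" "x \<in> U" "ys \<in> PiE {..<j} (\<lambda>_. carr X)"
        by (auto simp: topspace_subtopology)
      then show "(T \<circ> (\<lambda>(x, ys). dd X Y f j x ys)) p = (\<lambda>(x, ys). dd X Z g j x ys) p"
      proof -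
        have "\<forall>l<j. ys l \<in> carr X" using p(3) by auto
        then have "dd X Z g j x ys = T (dd X Y f j x ys)" using EQ[OF j] p(2) by blast
        then show ?thesis using p(1) by simp
      qed
    qed
  qed
qed


lemma Kfield_simps [simp]: "carr Kfield = UNIV" "scl Kfield c x = c * x" "sn Kfield = {norm}"
  unfolding Kfield_def by simp_all

context
  fixes E :: "('e::ab_group_add, 'k::real_normed_field) lcs"
    and F :: "('f::ab_group_add, 'k) lcs"
    and SE :: "'e set set" and SF :: "'f set set" and SF' :: "('f \<Rightarrow> 'k) set set"
  assumes lcsE: "lcs E" and lcsF: "lcs F"
    and covE: "bsf_covering E SE" and covF: "bsf_covering F SF"
    and covF': "bsf_covering (dual F SF) SF'"
    and compEF: "bsf_compat E SE F SF"
begin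

lemma lcsDF: "lcs (dual F SF)" unfolding dual_def by (rule lcs_L[OF lcsF lcs_K covF[unfolded dual_def]])
lemma lcsDE: "lcs (dual E SE)" unfolding dual_def by (rule lcs_L[OF lcsE lcs_K covE])
lemma lcsY: "lcs (Lsp E F SE)" by (rule lcs_L[OF lcsE lcsF covE])
lemma lcsZ: "lcs (Lsp (dual F SF) (dual E SE) SF')" by (rule lcs_L[OF lcsDF lcsDE covF'])
lemma lcsDDF: "lcs (dual (dual F SF) SF')" unfolding dual_def
  by (rule lcs_L[OF lcsDF[unfolded dual_def] lcs_K covF'[unfolded dual_def]])

lemma carrDF: "l \<in> carr (dual F SF) \<longleftrightarrow> clin F Kfield l \<and> (\<forall>x. x \<notin> carr F \<longrightarrow> l x = 0)"
  unfolding dual_def by (rule carr_L[OF lcsF lcs_K covF])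
lemma carrDE: "l \<in> carr (dual E SE) \<longleftrightarrow> clin E Kfield l \<and> (\<forall>x. x \<notin> carr E \<longrightarrow> l x = 0)"
  unfolding dual_def by (rule carr_L[OF lcsE lcs_K covE])
lemma carrY: "A \<in> carr (Lsp E F SE) \<longleftrightarrow> clin E F A \<and> (\<forall>x. x \<notin> carr E \<longrightarrow> A x = 0)"
  by (rule carr_L[OF lcsE lcsF covE])
lemma carrZ: "B \<in> carr (Lsp (dual F SF) (dual E SE) SF') \<longleftrightarrow> clin (dual F SF) (dual E SE) B \<and> (\<forall>x. x \<notin> carr (dual F SF) \<longrightarrow> B x = 0)"
  by (rule carr_L[OF lcsDF lcsDE covF'])
lemma sclDF: "scl (dual F SF) c l = (\<lambda>x. if x \<in> carr F then c * l x else 0)"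
  unfolding dual_def scl_L[OF lcsF lcs_K covF] by (simp add: fun_eq_iff)
lemma sclDE: "scl (dual E SE) c l = (\<lambda>x. if x \<in> carr E then c * l x else 0)"
  unfolding dual_def scl_L[OF lcsE lcs_K covE] by (simp add: fun_eq_iff)
lemma sclY: "scl (Lsp E F SE) c A = (\<lambda>x. if x \<in> carr E then scl F c (A x) else 0)"
  by (rule scl_L[OF lcsE lcsF covE])
lemma sclZ: "scl (Lsp (dual F SF) (dual E SE) SF') c B = (\<lambda>x. if x \<in> carr (dual F SF) then scl (dual E SE) c (B x) else 0)"
  by (rule scl_L[OF lcsDF lcsDE covF'])
lemma sclDDF: "scl (dual (dual F SF) SF') c B = (\<lambda>x. if x \<in> carr (dual F SF) then c * B x else 0)"
  unfolding dual_def scl_L[OF lcsDF[unfolded dual_def] lcs_K covF'[unfolded dual_def]] by (simp add: fun_eq_iff)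
lemma snDE: "sn (dual E SE) = {supn N norm | N. N \<in> SE}"
  unfolding dual_def sn_L[OF lcsE lcs_K covE] by simp
lemma snDF: "sn (dual F SF) = {supn N norm | N. N \<in> SF}"
  unfolding dual_def sn_L[OF lcsF lcs_K covF] by simp
lemma snDDF: "sn (dual (dual F SF) SF') = {supn M norm | M. M \<in> SF'}"
  unfolding dual_def sn_L[OF lcsDF[unfolded dual_def] lcs_K covF'[unfolded dual_def]] by simp
lemma snY: "sn (Lsp E F SE) = {supn N q | N q. N \<in> SE \<and> q \<in> sn F}"
  by (rule sn_L[OF lcsE lcsF covE])
lemma snZ: "sn (Lsp (dual F SF) (dual E SE) SF') = {supn M q | M q. M \<in> SF' \<and> q \<in> sn (dual E SE)}"
  by (rule sn_L[OF lcsDF lcsDE covF'])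

lemma DF_lin: "l \<in> carr (dual F SF) \<Longrightarrow> linmap F Kfield l"
  unfolding carrDF clin_linmap by blast
lemma Y_val: "A \<in> carr (Lsp E F SE) \<Longrightarrow> A x \<in> carr F"
  by (rule L_val[OF lcsE lcsF covE])
lemma Y_lin: "A \<in> carr (Lsp E F SE) \<Longrightarrow> linmap E F A"
  unfolding carrY clin_linmap by blast

lemma comp_in_DE:
  assumes A: "A \<in> carr (Lsp E F SE)" and l: "l \<in> carr (dual F SF)"
  shows "l \<circ> A \<in> carr (dual E SE)"
  unfolding carrDE clin_linmap
proof (intro conjI allI impI)
  have LA: "linmap E F A" using Y_lin[OF A] .
  have Ll: "linmap F Kfield l" using DF_lin[OF l] .
  show "linmap E Kfield (l \<circ> A)" unfolding linmap_def
  proof (intro conjI ballI allI)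
    fix x y assume x: "x \<in> carr E" and y: "y \<in> carr E"
    show "(l \<circ> A) (x + y) = (l \<circ> A) x + (l \<circ> A) y"
      using linmap_add[OF LA x y] linmap_add[OF Ll Y_val[OF A] Y_val[OF A]] by simp
  next
    fix c x assume x: "x \<in> carr E"
    show "(l \<circ> A) (scl E c x) = scl Kfield c ((l \<circ> A) x)"
      using linmap_scl[OF LA x] linmap_scl[OF Ll Y_val[OF A]] by simp
  qed simp
  show "continuous_map (lcs_top E) (lcs_top Kfield) (l \<circ> A)"
    using A l unfolding carrY carrDF clin_def by (blast intro: continuous_map_compose)
  fix x assume "x \<notin> carr E"
  then have "A x = 0" using A unfolding carrY by blast
  then show "(l \<circ> A) x = 0" using linmap_zero[OF lcsF Ll] by simp
qed

lemma T_in: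
  assumes A: "A \<in> carr (Lsp E F SE)"
  shows "transp F SF A \<in> carr (Lsp (dual F SF) (dual E SE) SF')"
  unfolding carrZ clin_linmap
proof (intro conjI allI impI)
  let ?T = "transp F SF A"
  have LA: "linmap E F A" using Y_lin[OF A] .
  show L: "linmap (dual F SF) (dual E SE) ?T" unfolding linmap_def
  proof (intro conjI ballI allI)
    fix l assume l: "l \<in> carr (dual F SF)"
    show "?T l \<in> carr (dual E SE)" using comp_in_DE[OF A l] l unfolding transp_def by simp
    fix l' assume l': "l' \<in> carr (dual F SF)"
    have "l + l' \<in> carr (dual F SF)" using add_in[OF lcsDF l l'] .
    then show "?T (l + l') = ?T l + ?T l'" using l l' unfolding transp_def by (auto simp: fun_eq_iff)
  next
    fix c l assume l: "l \<in> carr (dual F SF)"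
    have Ll: "linmap F Kfield l" using DF_lin[OF l] .
    have "scl (dual F SF) c l \<in> carr (dual F SF)" using scl_in[OF lcsDF l] .
    moreover have "(scl (dual F SF) c l) \<circ> A = scl (dual E SE) c (l \<circ> A)"
    proof (rule ext)
      fix x
      show "(scl (dual F SF) c l \<circ> A) x = scl (dual E SE) c (l \<circ> A) x"
      proof (cases "x \<in> carr E")
        case True then show ?thesis unfolding sclDF sclDE using Y_val[OF A] by simp
      next
        case False
        then have "A x = 0" using A unfolding carrY by blast
        then show ?thesis unfolding sclDF sclDE using False linmap_zero[OF lcsF Ll] zero_in[OF lcsF] by simp
      qed
    qed
    ultimately show "?T (scl (dual F SF) c l) = scl (dual E SE) c (?T l)"
      using l unfolding transp_def by simp
  qed
  have "cont0 (dual F SF) (dual E SE) ?T" unfolding cont0_def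
  proof (intro ballI allI impI)
    fix q r assume q: "q \<in> sn (dual E SE)" and r: "(0::real) < r"
    then obtain N where N: "N \<in> SE" and qN: "q = supn N norm" unfolding snDE by blast
    have AN: "A ` N \<in> SF" using compEF N A unfolding bsf_compat_def carrY by blast
    have p: "supn (A ` N) norm \<in> sn (dual F SF)" unfolding snDF using AN by blast
    show "\<exists>P \<delta>. finite P \<and> P \<subseteq> sn (dual F SF) \<and> 0 < \<delta> \<and>
           (\<forall>y\<in>carr (dual F SF). (\<forall>p\<in>P. p y < \<delta>) \<longrightarrow> q (?T y) < r)"
    proof (rule exI[of _ "{supn (A ` N) norm}"], rule exI[of _ r], intro conjI ballI impI)
      fix l assume l: "l \<in> carr (dual F SF)" and lp: "\<forall>p\<in>{supn (A ` N) norm}. p l < r"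
      have "q (?T l) = supn (A ` N) norm l"
        using l unfolding qN transp_def supn_def by (simp add: image_image)
      then show "q (?T l) < r" using lp by simp
    qed (use p r in auto)
  qed
  then show "continuous_map (lcs_top (dual F SF)) (lcs_top (dual E SE)) ?T"
    by (rule cont0_cont[OF lcsDF lcsDE L])
next
  fix l assume "l \<notin> carr (dual F SF)"
  then show "transp F SF A l = 0" unfolding transp_def by simp
qed

lemma T_lin: "linmap (Lsp E F SE) (Lsp (dual F SF) (dual E SE) SF') (transp F SF)"
  unfolding linmap_def
proof (intro conjI ballI allI)
  fix A assume A: "A \<in> carr (Lsp E F SE)"
  show "transp F SF A \<in> carr (Lsp (dual F SF) (dual E SE) SF')" by (rule T_in[OF A])
  fix B assume B: "B \<in> carr (Lsp E F SE)"
  show "transp F SF (A + B) = transp F SF A + transp F SF B"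
  proof (rule ext)
    fix l show "transp F SF (A + B) l = (transp F SF A + transp F SF B) l"
    proof (cases "l \<in> carr (dual F SF)")
      case True
      have Ll: "linmap F Kfield l" using DF_lin[OF True] .
      show ?thesis using True linmap_add[OF Ll Y_val[OF A] Y_val[OF B]] unfolding transp_def
        by (auto simp: fun_eq_iff)
    qed (simp add: transp_def)
  qed
next
  fix c A assume A: "A \<in> carr (Lsp E F SE)"
  show "transp F SF (scl (Lsp E F SE) c A) = scl (Lsp (dual F SF) (dual E SE) SF') c (transp F SF A)"
  proof (rule ext)
    fix l show "transp F SF (scl (Lsp E F SE) c A) l = scl (Lsp (dual F SF) (dual E SE) SF') c (transp F SF A) l"
    proof (cases "l \<in> carr (dual F SF)")
      case True
      have Ll: "linmap F Kfield l" using DF_lin[OF True] .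
      have "l \<circ> scl (Lsp E F SE) c A = scl (dual E SE) c (l \<circ> A)"
      proof (rule ext)
        fix x
        show "(l \<circ> scl (Lsp E F SE) c A) x = scl (dual E SE) c (l \<circ> A) x"
          unfolding sclY sclDE using linmap_scl[OF Ll Y_val[OF A]] linmap_zero[OF lcsF Ll] by simp
      qed
      then show ?thesis using True unfolding transp_def sclZ by simp
    qed (simp add: transp_def sclZ)
  qed
qed

lemma evl_lin:
  assumes eta: "continuous_map (lcs_top F) (lcs_top (dual (dual F SF) SF')) (evl F SF)"
  shows "linmap F (dual (dual F SF) SF') (evl F SF)"
  unfolding linmap_def
proof (intro conjI ballI allI)
  fix y assume y: "y \<in> carr F"
  show "evl F SF y \<in> carr (dual (dual F SF) SF')"
    using continuous_map_image_subset_topspace[OF eta] y by auto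
  fix y' assume y': "y' \<in> carr F"
  show "evl F SF (y + y') = evl F SF y + evl F SF y'"
  proof (rule ext)
    fix l show "evl F SF (y + y') l = (evl F SF y + evl F SF y') l"
    proof (cases "l \<in> carr (dual F SF)")
      case True then show ?thesis unfolding evl_def using linmap_add[OF DF_lin[OF True] y y'] by simp
    qed (simp add: evl_def)
  qed
next
  fix c y assume y: "y \<in> carr F"
  show "evl F SF (scl F c y) = scl (dual (dual F SF) SF') c (evl F SF y)"
  proof (rule ext)
    fix l show "evl F SF (scl F c y) l = scl (dual (dual F SF) SF') c (evl F SF y) l"
    proof (cases "l \<in> carr (dual F SF)")
      case True then show ?thesis unfolding evl_def sclDDF using linmap_scl[OF DF_lin[OF True] y] by simp
    qed (simp add: evl_def sclDDF)
  qed
qed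

lemma T_cont:
  assumes eta: "continuous_map (lcs_top F) (lcs_top (dual (dual F SF) SF')) (evl F SF)"
  shows "continuous_map (lcs_top (Lsp E F SE)) (lcs_top (Lsp (dual F SF) (dual E SE) SF')) (transp F SF)"
proof (rule cont0_cont[OF lcsY lcsZ T_lin], unfold cont0_def, intro ballI allI impI)
  fix Q r assume Q: "Q \<in> sn (Lsp (dual F SF) (dual E SE) SF')" and r: "(0::real) < r"
  obtain M q' where M: "M \<in> SF'" and q': "q' \<in> sn (dual E SE)" and QM: "Q = supn M q'"
    using Q unfolding snZ by blast
  obtain N where N: "N \<in> SE" and q'N: "q' = supn N norm" using q' unfolding snDE by blast
  have MDF: "M \<subseteq> carr (dual F SF)" using covF' M unfolding bsf_covering_def bnd_def by blast
  have NE: "N \<subseteq> carr E" using covE N unfolding bsf_covering_def bnd_def by blast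
  have Le: "linmap F (dual (dual F SF) SF') (evl F SF)" by (rule evl_lin[OF eta])
  have C0: "cont0 F (dual (dual F SF) SF') (evl F SF)" by (rule cont_cont0[OF lcsF lcsDDF Le eta])
  have qM: "supn M norm \<in> sn (dual (dual F SF) SF')" unfolding snDDF using M by blast
  have "\<exists>P \<delta>. finite P \<and> P \<subseteq> sn F \<and> 0 < \<delta> \<and>
      (\<forall>y\<in>carr F. (\<forall>p\<in>P. p y < \<delta>) \<longrightarrow> supn M norm (evl F SF y) < r / 2)"
    by (rule cont0D[OF C0 qM]) (use r in simp)
  then obtain P0 \<delta> where P0: "finite P0" "P0 \<subseteq> sn F" "0 < \<delta>"
    and est: "\<forall>y\<in>carr F. (\<forall>p\<in>P0. p y < \<delta>) \<longrightarrow> supn M norm (evl F SF y) < r / 2" by blast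
  show "\<exists>P \<delta>. finite P \<and> P \<subseteq> sn (Lsp E F SE) \<and> 0 < \<delta> \<and>
      (\<forall>A\<in>carr (Lsp E F SE). (\<forall>p\<in>P. p A < \<delta>) \<longrightarrow> Q (transp F SF A) < r)"
  proof (rule exI[of _ "(\<lambda>p. supn N p) ` P0"], rule exI[of _ \<delta>], intro conjI ballI impI)
    show "finite ((\<lambda>p. supn N p) ` P0)" using P0 by simp
    show "(\<lambda>p. supn N p) ` P0 \<subseteq> sn (Lsp E F SE)" unfolding snY using N P0 by blast
    show "0 < \<delta>" by (rule P0(3))
    fix A assume A: "A \<in> carr (Lsp E F SE)" and Ap: "\<forall>p\<in>(\<lambda>p. supn N p) ` P0. p A < \<delta>"
    have "Q (transp F SF A) \<le> r / 2" unfolding QM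
    proof (rule supn_le)
      show "0 \<le> r / 2" using r by simp
      fix l assume lM: "l \<in> M"
      then have l: "l \<in> carr (dual F SF)" using MDF by blast
      have "q' (transp F SF A l) = supn N norm (l \<circ> A)" using l unfolding transp_def q'N by simp
      also have "\<dots> \<le> r / 2"
      proof (rule supn_le)
        show "0 \<le> r / 2" using r by simp
        fix x assume xN: "x \<in> N"
        have Axc: "A x \<in> carr F" by (rule Y_val[OF A])
        have "p (A x) < \<delta>" if p: "p \<in> P0" for p
        proof -
          have "p (A x) \<le> supn N p A"
            by (rule supn_ge[OF L_bdd[OF lcsE lcsF covE A N] xN]) (use p P0 in auto)
          also have "\<dots> < \<delta>" using Ap p by auto
          finally show ?thesis .
        qed
        then have lt: "supn M norm (evl F SF (A x)) < r / 2" using est Axc by blast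
        have ec: "evl F SF (A x) \<in> carr (Lsp (dual F SF) Kfield SF')"
          using linmap_in[OF Le Axc] unfolding dual_def[of "dual F SF" SF'] .
        have "norm (evl F SF (A x) l) \<le> supn M norm (evl F SF (A x))"
          by (rule supn_ge[OF L_bdd[OF lcsDF lcs_K covF' ec M] lM]) simp
        moreover have "evl F SF (A x) l = (l \<circ> A) x" using l unfolding evl_def by simp
        ultimately show "norm ((l \<circ> A) x) \<le> r / 2" using lt by simp
      qed
      finally show "q' (transp F SF A l) \<le> r / 2" .
    qed
    then show "Q (transp F SF A) < r" using r by simp
  qed
qed

end


theorem proposition3p2:
  fixes E :: "('e::ab_group_add, 'k::real_normed_field) lcs"
    and F :: "('f::ab_group_add, 'k) lcs"
    and X :: "('x::ab_group_add, 'k) lcs"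
    and SE :: "'e set set" and SF :: "'f set set" and SF' :: "('f \<Rightarrow> 'k) set set"
    and n :: enat and U :: "'x set" and f :: "'x \<Rightarrow> 'e \<Rightarrow> 'f"
  assumes lcsE: "lcs E" and lcsF: "lcs F" and lcsX: "lcs X"
    and covE: "bsf_covering E SE" and covF: "bsf_covering F SF"
    and covF': "bsf_covering (dual F SF) SF'"
    and funct: "bsf_compat E SE E SE" "bsf_compat E SE F SF" "bsf_compat E SE (dual F SF) SF'"
               "bsf_compat F SF E SE" "bsf_compat F SF F SF" "bsf_compat F SF (dual F SF) SF'"
               "bsf_compat (dual F SF) SF' E SE" "bsf_compat (dual F SF) SF' F SF"
               "bsf_compat (dual F SF) SF' (dual F SF) SF'"
    and eta: "continuous_map (lcs_top F) (lcs_top (dual (dual F SF) SF')) (evl F SF)"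
    and U: "openin (lcs_top X) U"
    and f: "Cn X (Lsp E F SE) U f n"
  shows "Cn X (Lsp (dual F SF) (dual E SE) SF') U (\<lambda>z. transp F SF (f z)) n"
  proof -
  have T: "linmap (Lsp E F SE) (Lsp (dual F SF) (dual E SE) SF') (transp F SF)"
    by (rule T_lin[OF lcsE lcsF covE covF covF' funct(2)])
  have TC: "continuous_map (lcs_top (Lsp E F SE)) (lcs_top (Lsp (dual F SF) (dual E SE) SF')) (transp F SF)"
    by (rule T_cont[OF lcsE lcsF covE covF covF' funct(2) eta])
  show ?thesis unfolding Cn_def
  proof (intro allI impI)
    fix k assume "enat k \<le> n"
    then have "Ck X (Lsp E F SE) U f k" using f unfolding Cn_def by blast
    then show "Ck X (Lsp (dual F SF) (dual E SE) SF') U (\<lambda>z. transp F SF (f z)) k"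
      by (rule Ck_comp[OF lcsX lcsY[OF lcsE lcsF covE covF covF' funct(2)]
            lcsZ[OF lcsE lcsF covE covF covF' funct(2)] U T TC])
  qed
qed

end
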